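(* Let $A$ be an infinitesimal Hopf algebra with counit $\varepsilon$ and antipode $S$, and let $\mathrm{Prim}(A)=\{x\in A:\Delta(x)=x\otimes 1+1\otimes x\}$. Then $\mathrm{Ker}(\varepsilon)=\mathrm{Prim}(A)\oplus \mathrm{Ker}(\varepsilon)^2$, and the projection of $\mathrm{Ker}(\varepsilon)$ onto $\mathrm{Prim}(A)$ along $\mathrm{Ker}(\varepsilon)^2$ in this direct sum is (the restriction of) $-S$.
   Context: An infinitesimal bialgebra over a field $K$ is a $K$-vector space $A$ that is an associative unital algebra (product $m$, unit $1$) and a coassociative counital coalgebra (coproduct $\Delta$, counit $\varepsilon$) such that for all $a,b\in A$: $\Delta(ab)=\Delta(a)(1\otimes b)+(a\otimes 1)\Delta(b)-a\otimes b$. On the space $\mathcal{L}(A)$ of linear endomorphisms of $A$, the convolution product is $f\star g=m\circ(f\otimes g)\circ\Delta$, with unit $\nu\circ\varepsilon$, where $\nu(\lambda)=\lambda 1$. $A$ is an infinitesimal Hopf algebra if $\mathrm{Id}_A$ has an inverse $S$ for $\star$; $S$ is called the antipode. $\mathrm{Ker}(\varepsilon)^2$ denotes the linear span of products $xy$ with $x,y\in\mathrm{Ker}(\varepsilon)$. *)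

theory Defs
  imports Complex_Main
begin

definition unital_algebra :: "('k::field \<Rightarrow> 'a::ring_1 \<Rightarrow> 'a) \<Rightarrow> bool" where
  "unital_algebra scale \<longleftrightarrow> vector_space scale \<and>
     (\<forall>c a b. scale c (a * b) = scale c a * b \<and> scale c (a * b) = a * scale c b)"

text \<open>Elements of A\<otimes>A (resp. A\<otimes>A\<otimes>A) are represented by finite lists of simple
 tensors; two representations denote the same tensor iff all bilinear (resp.
 trilinear) forms agree on them (bilinear forms separate points of A\<otimes>A over a field).\<close>
definition bilinear_form :: "('k::field \<Rightarrow> 'a::ab_group_add \<Rightarrow> 'a) \<Rightarrow> ('a \<Rightarrow> 'a \<Rightarrow> 'k) \<Rightarrow> bool" where
  "bilinear_form scale \<beta> \<longleftrightarrow>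
     (\<forall>y. Vector_Spaces.linear scale (*) (\<lambda>x. \<beta> x y)) \<and>
     (\<forall>x. Vector_Spaces.linear scale (*) (\<lambda>y. \<beta> x y))"

definition trilinear_form :: "('k::field \<Rightarrow> 'a::ab_group_add \<Rightarrow> 'a) \<Rightarrow> ('a \<Rightarrow> 'a \<Rightarrow> 'a \<Rightarrow> 'k) \<Rightarrow> bool" where
  "trilinear_form scale \<tau> \<longleftrightarrow>
     (\<forall>y z. Vector_Spaces.linear scale (*) (\<lambda>x. \<tau> x y z)) \<and>
     (\<forall>x z. Vector_Spaces.linear scale (*) (\<lambda>y. \<tau> x y z)) \<and>
     (\<forall>x y. Vector_Spaces.linear scale (*) (\<lambda>z. \<tau> x y z))"

definition teq2 :: "('k::field \<Rightarrow> 'a::ab_group_add \<Rightarrow> 'a) \<Rightarrow> ('a \<times> 'a) list \<Rightarrow> ('a \<times> 'a) list \<Rightarrow> bool" where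
  "teq2 scale xs ys \<longleftrightarrow> (\<forall>\<beta>. bilinear_form scale \<beta> \<longrightarrow>
     (\<Sum>(x,y)\<leftarrow>xs. \<beta> x y) = (\<Sum>(x,y)\<leftarrow>ys. \<beta> x y))"

definition teq3 :: "('k::field \<Rightarrow> 'a::ab_group_add \<Rightarrow> 'a) \<Rightarrow> ('a \<times> 'a \<times> 'a) list \<Rightarrow> ('a \<times> 'a \<times> 'a) list \<Rightarrow> bool" where
  "teq3 scale xs ys \<longleftrightarrow> (\<forall>\<tau>. trilinear_form scale \<tau> \<longrightarrow>
     (\<Sum>(x,y,z)\<leftarrow>xs. \<tau> x y z) = (\<Sum>(x,y,z)\<leftarrow>ys. \<tau> x y z))"

text \<open>Infinitesimal bialgebra: unital algebra, coassociative counital coalgebra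
 (coproduct \<Delta> :: A \<Rightarrow> A\<otimes>A linear, counit \<epsilon> linear), and the infinitesimal
 compatibility \<Delta>(ab) = \<Delta>(a)(1\<otimes>b) + (a\<otimes>1)\<Delta>(b) - a\<otimes>b.\<close>
definition inf_bialgebra ::
  "('k::field \<Rightarrow> 'a::ring_1 \<Rightarrow> 'a) \<Rightarrow> ('a \<Rightarrow> ('a \<times> 'a) list) \<Rightarrow> ('a \<Rightarrow> 'k) \<Rightarrow> bool" where
  "inf_bialgebra scale \<Delta> \<epsilon> \<longleftrightarrow>
     unital_algebra scale \<and>
     (\<forall>a b. teq2 scale (\<Delta> (a + b)) (\<Delta> a @ \<Delta> b)) \<and>
     (\<forall>c a. teq2 scale (\<Delta> (scale c a)) (map (\<lambda>(x,y). (scale c x, y)) (\<Delta> a))) \<and>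
     Vector_Spaces.linear scale (*) \<epsilon> \<and>
     (\<forall>a. teq3 scale
        (concat (map (\<lambda>(x,y). map (\<lambda>(u,v). (u,v,y)) (\<Delta> x)) (\<Delta> a)))
        (concat (map (\<lambda>(x,y). map (\<lambda>(u,v). (x,u,v)) (\<Delta> y)) (\<Delta> a)))) \<and>
     (\<forall>a. (\<Sum>(x,y)\<leftarrow>\<Delta> a. scale (\<epsilon> x) y) = a) \<and>
     (\<forall>a. (\<Sum>(x,y)\<leftarrow>\<Delta> a. scale (\<epsilon> y) x) = a) \<and>
     (\<forall>a b. teq2 scale (\<Delta> (a * b))
        (map (\<lambda>(x,y). (x, y * b)) (\<Delta> a) @ map (\<lambda>(x,y). (a * x, y)) (\<Delta> b) @ [(- a, b)]))"

definition conv :: "('a \<Rightarrow> ('a \<times> 'a) list) \<Rightarrow> ('a \<Rightarrow> 'a) \<Rightarrow> ('a \<Rightarrow> 'a) \<Rightarrow> 'a \<Rightarrow> 'a::ring_1" where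
  "conv \<Delta> f g a = (\<Sum>(x,y)\<leftarrow>\<Delta> a. f x * g y)"

definition is_antipode ::
  "('k::field \<Rightarrow> 'a::ring_1 \<Rightarrow> 'a) \<Rightarrow> ('a \<Rightarrow> ('a \<times> 'a) list) \<Rightarrow> ('a \<Rightarrow> 'k) \<Rightarrow> ('a \<Rightarrow> 'a) \<Rightarrow> bool" where
  "is_antipode scale \<Delta> \<epsilon> S \<longleftrightarrow> Vector_Spaces.linear scale scale S \<and>
     (\<forall>a. conv \<Delta> S id a = scale (\<epsilon> a) 1) \<and> (\<forall>a. conv \<Delta> id S a = scale (\<epsilon> a) 1)"

definition Prim :: "('k::field \<Rightarrow> 'a::ring_1 \<Rightarrow> 'a) \<Rightarrow> ('a \<Rightarrow> ('a \<times> 'a) list) \<Rightarrow> 'a set" where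
  "Prim scale \<Delta> = {x. teq2 scale (\<Delta> x) [(x, 1), (1, x)]}"

definition Ker_eps :: "('a \<Rightarrow> 'k::zero) \<Rightarrow> 'a set" where
  "Ker_eps \<epsilon> = {x. \<epsilon> x = 0}"

definition Ker_eps_sq :: "('k::field \<Rightarrow> 'a::ring_1 \<Rightarrow> 'a) \<Rightarrow> ('a \<Rightarrow> 'k) \<Rightarrow> 'a set" where
  "Ker_eps_sq scale \<epsilon> = module.span scale {x * y | x y. x \<in> Ker_eps \<epsilon> \<and> y \<in> Ker_eps \<epsilon>}"

end

theory Submission imports Defs begin

lemma lin_sum_list:
  assumes "Vector_Spaces.linear s1 s2 f"
  shows "f (sum_list (map g xs)) = sum_list (map (\<lambda>x. f (g x)) xs)"
proof -
  interpret Vector_Spaces.linear s1 s2 f by fact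
  show ?thesis by (induct xs) (simp_all add: add)
qed

lemma vsK: "vector_space ((*)::'k::field\<Rightarrow>'k\<Rightarrow>'k)"
  by unfold_locales (simp_all add: algebra_simps)

lemma sep_gen:
  fixes s :: "'k::field \<Rightarrow> 'c::ab_group_add \<Rightarrow> 'c"
  assumes vs: "vector_space s" and h: "\<And>\<phi>. Vector_Spaces.linear s (*) \<phi> \<Longrightarrow> \<phi> u = \<phi> w"
  shows "u = w"
proof (rule ccontr)
  interpret vector_space s by fact
  assume ne: "u \<noteq> w"
  define v where "v = u - w"
  have v0: "v \<noteq> 0" using ne by (simp add: v_def)
  have ind: "independent {v}"
    using v0 by (intro independent_insertI) (auto simp: independent_empty)
  define B where "B = extend_basis {v}"
  have iB: "independent B" and sB: "span B = UNIV" and vB: "v \<in> B"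
    using independent_extend_basis[OF ind] span_extend_basis[OF ind] extend_basis_superset[OF ind]
    by (auto simp: B_def)
  have lin: "Vector_Spaces.linear s (*) (\<lambda>x. representation B x v)"
    by (rule linear_representation[OF iB sB])
  have "representation B v v = 1" using representation_basis[OF iB vB] by simp
  moreover have "representation B v v = 0"
  proof -
    interpret l: Vector_Spaces.linear s "(*)" "\<lambda>x. representation B x v" by (rule lin)
    have "representation B u v = representation B w v" using h[OF lin] .
    then show ?thesis using l.diff[of u w] by (simp add: v_def)
  qed
  ultimately show False by simp
qed

definition bil :: "('k::field \<Rightarrow> 'a::ab_group_add \<Rightarrow> 'a) \<Rightarrow> ('k \<Rightarrow> 'c::ab_group_add \<Rightarrow> 'c) \<Rightarrow> ('a \<Rightarrow> 'a \<Rightarrow> 'c) \<Rightarrow> bool" where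
  "bil sa s B \<longleftrightarrow> (\<forall>y. Vector_Spaces.linear sa s (\<lambda>x. B x y)) \<and> (\<forall>x. Vector_Spaces.linear sa s (\<lambda>y. B x y))"

definition tril :: "('k::field \<Rightarrow> 'a::ab_group_add \<Rightarrow> 'a) \<Rightarrow> ('k \<Rightarrow> 'c::ab_group_add \<Rightarrow> 'c) \<Rightarrow> ('a \<Rightarrow> 'a \<Rightarrow> 'a \<Rightarrow> 'c) \<Rightarrow> bool" where
  "tril sa s T \<longleftrightarrow> (\<forall>y z. Vector_Spaces.linear sa s (\<lambda>x. T x y z)) \<and> (\<forall>x z. Vector_Spaces.linear sa s (\<lambda>y. T x y z))
     \<and> (\<forall>x y. Vector_Spaces.linear sa s (\<lambda>z. T x y z))"

lemma lin_comp2: "Vector_Spaces.linear s1 s2 f \<Longrightarrow> Vector_Spaces.linear s2 s3 g \<Longrightarrow> Vector_Spaces.linear s1 s3 (\<lambda>x. g (f x))"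
  using Vector_Spaces.linear_compose[of s1 s2 f s3 g] by (simp add: o_def)

lemma teq2_gen:
  fixes s :: "'k::field \<Rightarrow> 'c::ab_group_add \<Rightarrow> 'c"
  assumes t: "teq2 sa xs ys" and vs: "vector_space s" and b: "bil sa s B"
  shows "(\<Sum>(x,y)\<leftarrow>xs. B x y) = (\<Sum>(x,y)\<leftarrow>ys. B x y)"
proof (rule sep_gen[OF vs])
  fix \<phi> assume \<phi>: "Vector_Spaces.linear s (*) \<phi>"
  have "bilinear_form sa (\<lambda>x y. \<phi> (B x y))"
    using b \<phi> unfolding bil_def bilinear_form_def by (auto intro: lin_comp2)
  then have "(\<Sum>(x,y)\<leftarrow>xs. \<phi> (B x y)) = (\<Sum>(x,y)\<leftarrow>ys. \<phi> (B x y))"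
    using t unfolding teq2_def by blast
  then show "\<phi> (\<Sum>(x,y)\<leftarrow>xs. B x y) = \<phi> (\<Sum>(x,y)\<leftarrow>ys. B x y)"
    by (simp add: lin_sum_list[OF \<phi>] split_def)
qed

lemma teq3_gen:
  fixes s :: "'k::field \<Rightarrow> 'c::ab_group_add \<Rightarrow> 'c"
  assumes t: "teq3 sa xs ys" and vs: "vector_space s" and b: "tril sa s T"
  shows "(\<Sum>(x,y,z)\<leftarrow>xs. T x y z) = (\<Sum>(x,y,z)\<leftarrow>ys. T x y z)"
proof (rule sep_gen[OF vs])
  fix \<phi> assume \<phi>: "Vector_Spaces.linear s (*) \<phi>"
  have "trilinear_form sa (\<lambda>x y z. \<phi> (T x y z))"
    unfolding trilinear_form_def
  proof (intro conjI allI)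
    fix y z show "Vector_Spaces.linear sa (*) (\<lambda>x. \<phi> (T x y z))"
      using lin_comp2[where f="\<lambda>x. T x y z" and g=\<phi>, OF _ \<phi>] b unfolding tril_def by simp
  next
    fix x z show "Vector_Spaces.linear sa (*) (\<lambda>y. \<phi> (T x y z))"
      using lin_comp2[where f="\<lambda>y. T x y z" and g=\<phi>, OF _ \<phi>] b unfolding tril_def by simp
  next
    fix x y show "Vector_Spaces.linear sa (*) (\<lambda>z. \<phi> (T x y z))"
      using lin_comp2[where f="\<lambda>z. T x y z" and g=\<phi>, OF _ \<phi>] b unfolding tril_def by simp
  qed
  then have "(\<Sum>(x,y,z)\<leftarrow>xs. \<phi> (T x y z)) = (\<Sum>(x,y,z)\<leftarrow>ys. \<phi> (T x y z))"
    using t unfolding teq3_def by blast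
  then show "\<phi> (\<Sum>(x,y,z)\<leftarrow>xs. T x y z) = \<phi> (\<Sum>(x,y,z)\<leftarrow>ys. T x y z)"
    by (simp add: lin_sum_list[OF \<phi>] split_def)
qed

lemma bil_K: "bilinear_form sa \<beta> \<longleftrightarrow> bil sa (*) \<beta>"
  by (simp add: bilinear_form_def bil_def)


context
  fixes s1 :: "'k::field \<Rightarrow> 'a::ab_group_add \<Rightarrow> 'a" and s2 :: "'k \<Rightarrow> 'c::ab_group_add \<Rightarrow> 'c" and f
  assumes lf: "Vector_Spaces.linear s1 s2 f"
begin
interpretation l: Vector_Spaces.linear s1 s2 f by (rule lf)
lemma lin_add: "f (x + y) = f x + f y" by (rule l.add)
lemma lin_scale: "f (s1 c x) = s2 c (f x)" by (rule l.scale)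
lemma lin_neg: "f (- x) = - f x" by (rule l.neg)
lemma lin_diff: "f (x - y) = f x - f y" by (rule l.diff)
lemma lin_zero: "f 0 = 0" by (rule l.zero)
end

lemma sc_sum_list:
  assumes "vector_space s"
  shows "s c (sum_list (map g xs)) = sum_list (map (\<lambda>x. s c (g x)) xs)"
proof -
  interpret vector_space s by fact
  show ?thesis by (induct xs) (simp_all add: scale_right_distrib)
qed

lemma sum_list_concat_map: "sum_list (map f (concat xss)) = sum_list (map (\<lambda>xs. sum_list (map f xs)) xss)"
  by (induct xss) simp_all

locale ihopf =
  fixes scale :: "'k::field \<Rightarrow> 'a::ring_1 \<Rightarrow> 'a"
    and \<Delta> :: "'a \<Rightarrow> ('a \<times> 'a) list" and \<epsilon> :: "'a \<Rightarrow> 'k" and S :: "'a \<Rightarrow> 'a"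
  assumes bi: "inf_bialgebra scale \<Delta> \<epsilon>"
    and ant: "is_antipode scale \<Delta> \<epsilon> S"
begin

lemma vsA: "vector_space scale" using bi unfolding inf_bialgebra_def unital_algebra_def by blast

sublocale vs: vector_space scale by (rule vsA)

lemma smul_l: "scale c (a * b) = scale c a * b"
  using bi unfolding inf_bialgebra_def unital_algebra_def by blast
lemma smul_r: "scale c (a * b) = a * scale c b"
  using bi unfolding inf_bialgebra_def unital_algebra_def by blast

lemma Dadd: "teq2 scale (\<Delta> (a + b)) (\<Delta> a @ \<Delta> b)"
  using bi unfolding inf_bialgebra_def by blast
lemma Dsc: "teq2 scale (\<Delta> (scale c a)) (map (\<lambda>(x,y). (scale c x, y)) (\<Delta> a))"
  using bi unfolding inf_bialgebra_def by blast
lemma lin_eps: "Vector_Spaces.linear scale (*) \<epsilon>"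
  using bi unfolding inf_bialgebra_def by blast
lemma Dcoass: "teq3 scale
        (concat (map (\<lambda>(x,y). map (\<lambda>(u,v). (u,v,y)) (\<Delta> x)) (\<Delta> a)))
        (concat (map (\<lambda>(x,y). map (\<lambda>(u,v). (x,u,v)) (\<Delta> y)) (\<Delta> a)))"
  using bi unfolding inf_bialgebra_def by blast
lemma cL: "(\<Sum>(x,y)\<leftarrow>\<Delta> a. scale (\<epsilon> x) y) = a"
  using bi unfolding inf_bialgebra_def by blast
lemma cR: "(\<Sum>(x,y)\<leftarrow>\<Delta> a. scale (\<epsilon> y) x) = a"
  using bi unfolding inf_bialgebra_def by blast
lemma Dcomp: "teq2 scale (\<Delta> (a * b))
        (map (\<lambda>(x,y). (x, y * b)) (\<Delta> a) @ map (\<lambda>(x,y). (a * x, y)) (\<Delta> b) @ [(- a, b)])"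
  using bi unfolding inf_bialgebra_def by blast
lemma lin_S: "Vector_Spaces.linear scale scale S"
  using ant by (simp add: is_antipode_def)
lemma antL: "(\<Sum>(x,y)\<leftarrow>\<Delta> a. S x * y) = scale (\<epsilon> a) 1"
  using ant by (simp add: is_antipode_def conv_def)
lemma antR: "(\<Sum>(x,y)\<leftarrow>\<Delta> a. x * S y) = scale (\<epsilon> a) 1"
  using ant by (simp add: is_antipode_def conv_def)

lemma linA_iff: "Vector_Spaces.linear scale scale f \<longleftrightarrow> (\<forall>x y. f (x + y) = f x + f y) \<and> (\<forall>c x. f (scale c x) = scale c (f x))"
  by (simp add: Vector_Spaces.linear_iff vsA)
lemma linK_iff: "Vector_Spaces.linear scale (*) f \<longleftrightarrow> (\<forall>x y. f (x + y) = f x + f y) \<and> (\<forall>c x. f (scale c x) = c * f x)"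
  by (simp add: Vector_Spaces.linear_iff vsA vsK)

lemma lin_mr: "Vector_Spaces.linear scale scale (\<lambda>z. z * y)"
  unfolding linA_iff by (simp add: distrib_right smul_l)
lemma lin_ml: "Vector_Spaces.linear scale scale (\<lambda>z. y * z)"
  unfolding linA_iff by (simp add: distrib_left smul_r)

context
  fixes s :: "'k \<Rightarrow> 'c::ab_group_add \<Rightarrow> 'c" and B
  assumes vs2: "vector_space s" and bB: "bil scale s B"
begin

lemma B1: "Vector_Spaces.linear scale s (\<lambda>x. B x y)" using bB by (simp add: bil_def)
lemma B2: "Vector_Spaces.linear scale s (\<lambda>y. B x y)" using bB by (simp add: bil_def)

lemma D_add: "(\<Sum>(x,y)\<leftarrow>\<Delta> (a + b). B x y) = (\<Sum>(x,y)\<leftarrow>\<Delta> a. B x y) + (\<Sum>(x,y)\<leftarrow>\<Delta> b. B x y)"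
  using teq2_gen[OF Dadd vs2 bB] by simp

lemma D_scale: "(\<Sum>(x,y)\<leftarrow>\<Delta> (scale c a). B x y) = s c (\<Sum>(x,y)\<leftarrow>\<Delta> a. B x y)"
proof -
  have "(\<Sum>(x,y)\<leftarrow>\<Delta> (scale c a). B x y) = (\<Sum>(x,y)\<leftarrow>\<Delta> a. B (scale c x) y)"
    using teq2_gen[OF Dsc vs2 bB] by (simp add: o_def split_def)
  also have "\<dots> = (\<Sum>(x,y)\<leftarrow>\<Delta> a. s c (B x y))"
    by (simp add: lin_scale[OF B1] split_def)
  also have "\<dots> = s c (\<Sum>(x,y)\<leftarrow>\<Delta> a. B x y)"
    by (simp add: sc_sum_list[OF vs2] split_def)
  finally show ?thesis .
qed

lemma D_lin: "Vector_Spaces.linear scale s (\<lambda>c. \<Sum>(x,y)\<leftarrow>\<Delta> c. B x y)"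
  unfolding Vector_Spaces.linear_iff using vsA vs2 D_add D_scale by blast

lemma D_comp: "(\<Sum>(x,y)\<leftarrow>\<Delta> (a * b). B x y) =
   (\<Sum>(x,y)\<leftarrow>\<Delta> a. B x (y * b)) + (\<Sum>(x,y)\<leftarrow>\<Delta> b. B (a * x) y) - B a b"
  using teq2_gen[OF Dcomp vs2 bB] by (simp add: o_def split_def lin_neg[OF B1])

lemma D_one: "(\<Sum>(x,y)\<leftarrow>\<Delta> 1. B x y) = B 1 1"
  using D_comp[of 1 1] by simp

end

lemma D_coass:
  fixes s :: "'k \<Rightarrow> 'c::ab_group_add \<Rightarrow> 'c"
  assumes vs2: "vector_space s" and tT: "tril scale s T"
  shows "(\<Sum>(x,y)\<leftarrow>\<Delta> a. \<Sum>(u,v)\<leftarrow>\<Delta> x. T u v y) = (\<Sum>(x,y)\<leftarrow>\<Delta> a. \<Sum>(u,v)\<leftarrow>\<Delta> y. T x u v)"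
  using teq3_gen[OF Dcoass vs2 tT, of a] by (simp add: sum_list_concat_map o_def split_def)

lemma bilA: "(\<And>y. Vector_Spaces.linear scale scale (\<lambda>x. B x y)) \<Longrightarrow> (\<And>x. Vector_Spaces.linear scale scale (\<lambda>y. B x y)) \<Longrightarrow> bil scale scale B"
  by (simp add: bil_def)
lemma bilK: "(\<And>y. Vector_Spaces.linear scale (*) (\<lambda>x. B x y)) \<Longrightarrow> (\<And>x. Vector_Spaces.linear scale (*) (\<lambda>y. B x y)) \<Longrightarrow> bil scale (*) B"
  by (simp add: bil_def)
lemma trilA: "(\<And>y z. Vector_Spaces.linear scale scale (\<lambda>x. T x y z)) \<Longrightarrow> (\<And>x z. Vector_Spaces.linear scale scale (\<lambda>y. T x y z))
   \<Longrightarrow> (\<And>x y. Vector_Spaces.linear scale scale (\<lambda>z. T x y z)) \<Longrightarrow> tril scale scale T"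
  by (simp add: tril_def)
lemma trilK: "(\<And>y z. Vector_Spaces.linear scale (*) (\<lambda>x. T x y z)) \<Longrightarrow> (\<And>x z. Vector_Spaces.linear scale (*) (\<lambda>y. T x y z))
   \<Longrightarrow> (\<And>x y. Vector_Spaces.linear scale (*) (\<lambda>z. T x y z)) \<Longrightarrow> tril scale (*) T"
  by (simp add: tril_def)

lemma lin_epsx: "Vector_Spaces.linear scale scale (\<lambda>x. scale (\<epsilon> x) y)"
  unfolding linA_iff by (simp add: lin_add[OF lin_eps] lin_scale[OF lin_eps] vs.scale_left_distrib)
lemma lin_sc: "Vector_Spaces.linear scale scale (\<lambda>y. scale c y)"
  unfolding linA_iff by (simp add: vs.scale_right_distrib mult.commute)

lemma eps1: "\<epsilon> 1 = 1"
proof -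
  have "scale (\<epsilon> 1) 1 = (1::'a)"
    using D_one[OF vsA bilA[OF lin_epsx lin_sc]] cL[of 1] by simp
  then have "scale (\<epsilon> 1 - 1) (1::'a) = 0" by (simp add: vs.scale_left_diff_distrib)
  then show ?thesis by simp
qed

lemma S1: "S 1 = 1"
proof -
  have b: "bil scale scale (\<lambda>x y. S x * y)"
    by (rule bilA[OF lin_comp2[OF lin_S lin_mr] lin_ml])
  show ?thesis using D_one[OF vsA b] antL[of 1] by (simp add: eps1)
qed

lemma eps_sum: "(\<Sum>(x,y)\<leftarrow>\<Delta> c. \<epsilon> x * \<epsilon> y) = \<epsilon> c"
proof -
  have "\<epsilon> c = \<epsilon> (\<Sum>(x,y)\<leftarrow>\<Delta> c. scale (\<epsilon> x) y)" by (simp add: cL)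
  also have "\<dots> = (\<Sum>(x,y)\<leftarrow>\<Delta> c. \<epsilon> x * \<epsilon> y)"
    by (simp add: lin_sum_list[OF lin_eps] lin_scale[OF lin_eps] split_def)
  finally show ?thesis by simp
qed

lemma eps_mult: "\<epsilon> (a * b) = \<epsilon> a * \<epsilon> b"
proof -
  have b: "bil scale (*) (\<lambda>x y. \<epsilon> x * \<epsilon> y)"
    by (rule bilK) (simp_all add: linK_iff lin_add[OF lin_eps] lin_scale[OF lin_eps] distrib_left distrib_right mult.assoc mult.left_commute)
  have e1: "(\<Sum>(x,y)\<leftarrow>\<Delta> a. \<epsilon> x * \<epsilon> (y * b)) = \<epsilon> (a * b)"
  proof -
    have "\<epsilon> (a * b) = \<epsilon> ((\<Sum>(x,y)\<leftarrow>\<Delta> a. scale (\<epsilon> x) y) * b)" by (simp add: cL)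
    also have "\<dots> = \<epsilon> (\<Sum>(x,y)\<leftarrow>\<Delta> a. scale (\<epsilon> x) (y * b))"
      by (simp add: sum_list_mult_const split_def smul_l)
    also have "\<dots> = (\<Sum>(x,y)\<leftarrow>\<Delta> a. \<epsilon> x * \<epsilon> (y * b))"
      by (simp add: lin_sum_list[OF lin_eps] lin_scale[OF lin_eps] split_def)
    finally show ?thesis by simp
  qed
  have e2: "(\<Sum>(x,y)\<leftarrow>\<Delta> b. \<epsilon> (a * x) * \<epsilon> y) = \<epsilon> (a * b)"
  proof -
    have "\<epsilon> (a * b) = \<epsilon> (a * (\<Sum>(x,y)\<leftarrow>\<Delta> b. scale (\<epsilon> y) x))" by (simp add: cR)
    also have "\<dots> = \<epsilon> (\<Sum>(x,y)\<leftarrow>\<Delta> b. scale (\<epsilon> y) (a * x))"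
      by (simp add: sum_list_const_mult split_def smul_r)
    also have "\<dots> = (\<Sum>(x,y)\<leftarrow>\<Delta> b. \<epsilon> (a * x) * \<epsilon> y)"
      by (simp add: lin_sum_list[OF lin_eps] lin_scale[OF lin_eps] split_def mult.commute)
    finally show ?thesis by simp
  qed
  show ?thesis using D_comp[OF vsK b, of a b] eps_sum[of "a*b"] e1 e2 by simp
qed

lemma bSm: "bil scale scale (\<lambda>x y. S x * y)"
  by (rule bilA[OF lin_comp2[OF lin_S lin_mr] lin_ml])

lemma eps_S: "\<epsilon> (S a) = \<epsilon> a"
proof -
  have "\<epsilon> (S a) = \<epsilon> (S (\<Sum>(x,y)\<leftarrow>\<Delta> a. scale (\<epsilon> y) x))" by (simp add: cR)
  also have "\<dots> = (\<Sum>(x,y)\<leftarrow>\<Delta> a. \<epsilon> (S x) * \<epsilon> y)"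
    by (simp add: lin_sum_list[OF lin_S] lin_sum_list[OF lin_eps] lin_scale[OF lin_S]
        lin_scale[OF lin_eps] split_def mult.commute)
  also have "\<dots> = \<epsilon> (\<Sum>(x,y)\<leftarrow>\<Delta> a. S x * y)"
    by (simp add: lin_sum_list[OF lin_eps] split_def eps_mult)
  also have "\<dots> = \<epsilon> a" by (simp add: antL lin_scale[OF lin_eps] eps1)
  finally show ?thesis .
qed

lemma F5: assumes "\<epsilon> a = 0" shows "(\<Sum>(x,y)\<leftarrow>\<Delta> b. S (a * x) * y) = S a * b"
proof -
  have "(\<Sum>(x,y)\<leftarrow>\<Delta> a. S x * (y * b)) = (\<Sum>(x,y)\<leftarrow>\<Delta> a. S x * y) * b"
    by (simp add: sum_list_mult_const[symmetric] split_def mult.assoc)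
  also have "\<dots> = 0" by (simp add: antL assms)
  finally have z: "(\<Sum>(x,y)\<leftarrow>\<Delta> a. S x * (y * b)) = 0" .
  have "(\<Sum>(x,y)\<leftarrow>\<Delta> (a * b). S x * y) = 0" by (simp add: antL eps_mult assms)
  then show ?thesis using D_comp[OF vsA bSm, of a b] z by simp
qed

lemma F6: assumes a0: "\<epsilon> a = 0" shows "S (a * b) = scale (\<epsilon> b) (S a)"
proof -
  have t: "tril scale scale (\<lambda>p q r. S (a * p) * (q * S r))"
    by (rule trilA) (auto intro!: lin_comp2[OF lin_ml] lin_comp2[OF lin_S] lin_comp2[OF lin_mr] lin_ml lin_mr)
  have "(\<Sum>(x,y)\<leftarrow>\<Delta> b. \<Sum>(u,v)\<leftarrow>\<Delta> x. S (a * u) * (v * S y)) = (\<Sum>(x,y)\<leftarrow>\<Delta> b. (\<Sum>(u,v)\<leftarrow>\<Delta> x. S (a * u) * v) * S y)"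
    by (simp add: sum_list_mult_const[symmetric] split_def mult.assoc)
  also have "\<dots> = (\<Sum>(x,y)\<leftarrow>\<Delta> b. S a * (x * S y))"
    by (simp add: F5[OF a0] mult.assoc)
  also have "\<dots> = S a * scale (\<epsilon> b) 1"
    using antR[of b] by (simp add: sum_list_const_mult split_def)
  finally have l: "(\<Sum>(x,y)\<leftarrow>\<Delta> b. \<Sum>(u,v)\<leftarrow>\<Delta> x. S (a * u) * (v * S y)) = S a * scale (\<epsilon> b) 1" .
  have "(\<Sum>(x,y)\<leftarrow>\<Delta> b. \<Sum>(u,v)\<leftarrow>\<Delta> y. S (a * x) * (u * S v)) = (\<Sum>(x,y)\<leftarrow>\<Delta> b. S (a * x) * (\<Sum>(u,v)\<leftarrow>\<Delta> y. u * S v))"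
    by (simp add: sum_list_const_mult split_def)
  also have "\<dots> = (\<Sum>(x,y)\<leftarrow>\<Delta> b. S (scale (\<epsilon> y) (a * x)))"
    by (simp add: antR lin_scale[OF lin_S] smul_r[symmetric])
  also have "\<dots> = S (a * (\<Sum>(x,y)\<leftarrow>\<Delta> b. scale (\<epsilon> y) x))"
    by (simp add: lin_sum_list[OF lin_S] sum_list_const_mult[symmetric] split_def smul_r)
  also have "\<dots> = S (a * b)" by (simp add: cR)
  finally have r: "(\<Sum>(x,y)\<leftarrow>\<Delta> b. \<Sum>(u,v)\<leftarrow>\<Delta> y. S (a * x) * (u * S v)) = S (a * b)" .
  show ?thesis using D_coass[OF vsA t, of b] l r by (simp add: smul_r[symmetric])
qed

lemma sc_sum_left: "scale (sum_list (map f xs)) v = sum_list (map (\<lambda>x. scale (f x) v) xs)"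
  by (induct xs) (simp_all add: vs.scale_left_distrib)

lemma span_sum_list: "(\<And>x. x \<in> set xs \<Longrightarrow> f x \<in> vs.span A) \<Longrightarrow> sum_list (map f xs) \<in> vs.span A"
  by (induct xs) (simp_all add: vs.span_zero vs.span_add)

lemma Ker_sq_sub: "Ker_eps_sq scale \<epsilon> \<subseteq> Ker_eps \<epsilon>"
proof -
  have "vs.subspace (Ker_eps \<epsilon>)"
    unfolding vs.subspace_def Ker_eps_def
    by (simp add: lin_zero[OF lin_eps] lin_add[OF lin_eps] lin_scale[OF lin_eps])
  moreover have "{x * y |x y. x \<in> Ker_eps \<epsilon> \<and> y \<in> Ker_eps \<epsilon>} \<subseteq> Ker_eps \<epsilon>"
    by (auto simp: Ker_eps_def eps_mult)
  ultimately show ?thesis unfolding Ker_eps_sq_def by (rule vs.span_minimal[rotated])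
qed

lemma S_Ker_sq: assumes "x \<in> Ker_eps_sq scale \<epsilon>" shows "S x = 0"
proof -
  have "vs.subspace {x. S x = 0}"
    unfolding vs.subspace_def
    by (simp add: lin_zero[OF lin_S] lin_add[OF lin_S] lin_scale[OF lin_S])
  moreover have "{x * y |x y. x \<in> Ker_eps \<epsilon> \<and> y \<in> Ker_eps \<epsilon>} \<subseteq> {x. S x = 0}"
    by (auto simp: Ker_eps_def F6)
  ultimately have "Ker_eps_sq scale \<epsilon> \<subseteq> {x. S x = 0}"
    unfolding Ker_eps_sq_def by (rule vs.span_minimal[rotated])
  then show ?thesis using assms by auto
qed

lemma Prim_eps: assumes "x \<in> Prim scale \<Delta>" shows "\<epsilon> x = 0"
proof -
  have t: "teq2 scale (\<Delta> x) [(x, 1), (1, x)]" using assms by (simp add: Prim_def)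
  have "x = scale (\<epsilon> x) 1 + x"
    using teq2_gen[OF t vsA bilA[OF lin_epsx lin_sc]] cL[of x] by (simp add: eps1)
  then show ?thesis by simp
qed

lemma Prim_S: assumes "x \<in> Prim scale \<Delta>" shows "S x = - x"
proof -
  have t: "teq2 scale (\<Delta> x) [(x, 1), (1, x)]" using assms by (simp add: Prim_def)
  have "0 = S x + x"
    using teq2_gen[OF t vsA bSm] antL[of x] by (simp add: Prim_eps[OF assms] S1)
  then show ?thesis by (simp add: eq_neg_iff_add_eq_0)
qed

lemma F10: assumes k0: "\<epsilon> k = 0" shows "k + S k \<in> Ker_eps_sq scale \<epsilon>"
proof -
  define g where "g = (\<lambda>x y. (x - scale (\<epsilon> x) 1) * S (y - scale (\<epsilon> y) 1))"
  have pw: "g x y = x * S y - scale (\<epsilon> y) x - scale (\<epsilon> x) (S y) + scale (\<epsilon> x * \<epsilon> y) 1" for x y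
  proof -
    have "g x y = (x - scale (\<epsilon> x) 1) * (S y - scale (\<epsilon> y) 1)"
      by (simp add: g_def lin_diff[OF lin_S] lin_scale[OF lin_S] S1)
    also have "\<dots> = x * S y - x * scale (\<epsilon> y) 1 - scale (\<epsilon> x) 1 * S y + scale (\<epsilon> x) 1 * scale (\<epsilon> y) 1"
      by (simp add: algebra_simps)
    also have "\<dots> = x * S y - scale (\<epsilon> y) x - scale (\<epsilon> x) (S y) + scale (\<epsilon> x * \<epsilon> y) 1"
      by (simp add: smul_r[symmetric] smul_l[symmetric])
    finally show ?thesis .
  qed
  have "(\<Sum>(x,y)\<leftarrow>\<Delta> k. g x y) = (\<Sum>(x,y)\<leftarrow>\<Delta> k. x * S y) - (\<Sum>(x,y)\<leftarrow>\<Delta> k. scale (\<epsilon> y) x)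
      - (\<Sum>(x,y)\<leftarrow>\<Delta> k. scale (\<epsilon> x) (S y)) + (\<Sum>(x,y)\<leftarrow>\<Delta> k. scale (\<epsilon> x * \<epsilon> y) 1)"
    by (simp add: pw split_def sum_list_addf sum_list_subtractf)
  also have "\<dots> = - (k + S k)"
  proof -
    have "(\<Sum>(x,y)\<leftarrow>\<Delta> k. scale (\<epsilon> x) (S y)) = S k"
    proof -
      have "S k = S (\<Sum>(x,y)\<leftarrow>\<Delta> k. scale (\<epsilon> x) y)" by (simp add: cL)
      then show ?thesis by (simp add: lin_sum_list[OF lin_S] lin_scale[OF lin_S] split_def)
    qed
    moreover have "(\<Sum>(x,y)\<leftarrow>\<Delta> k. scale (\<epsilon> x * \<epsilon> y) 1) = (0::'a)"
      using sc_sum_left[of "\<lambda>(x,y). \<epsilon> x * \<epsilon> y" "\<Delta> k" 1] eps_sum[of k] k0 by (simp add: split_def)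
    ultimately show ?thesis by (simp add: antR k0 cR)
  qed
  finally have e: "(\<Sum>(x,y)\<leftarrow>\<Delta> k. g x y) = - (k + S k)" .
  have "(\<Sum>(x,y)\<leftarrow>\<Delta> k. g x y) \<in> Ker_eps_sq scale \<epsilon>"
    unfolding Ker_eps_sq_def
  proof (rule span_sum_list)
    fix p assume "p \<in> set (\<Delta> k)"
    obtain x y where p: "p = (x, y)" by (cases p)
    have "\<epsilon> (x - scale (\<epsilon> x) 1) = 0"
      by (simp add: lin_diff[OF lin_eps] lin_scale[OF lin_eps] eps1)
    moreover have "\<epsilon> (S (y - scale (\<epsilon> y) 1)) = 0"
      by (simp add: eps_S lin_diff[OF lin_eps] lin_scale[OF lin_eps] eps1)
    ultimately show "(\<lambda>(x,y). g x y) p \<in> vs.span {x * y |x y. x \<in> Ker_eps \<epsilon> \<and> y \<in> Ker_eps \<epsilon>}"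
      unfolding p g_def by (intro vs.span_base) (auto simp: Ker_eps_def)
  qed
  then have "- (k + S k) \<in> Ker_eps_sq scale \<epsilon>" using e by simp
  then have "- (- (k + S k)) \<in> Ker_eps_sq scale \<epsilon>" unfolding Ker_eps_sq_def by (rule vs.span_neg)
  then show ?thesis by (simp add: add.commute)
qed

definition Phi :: "('a \<Rightarrow> 'a \<Rightarrow> 'k) \<Rightarrow> 'a \<Rightarrow> 'k" where
  "Phi \<beta> c = (\<Sum>(x,y)\<leftarrow>\<Delta> c. \<beta> x y)"

context
  fixes \<beta> :: "'a \<Rightarrow> 'a \<Rightarrow> 'k"
  assumes b\<beta>: "bil scale (*) \<beta>"
begin

lemma bL: "Vector_Spaces.linear scale (*) (\<lambda>x. \<beta> x y)" by (rule B1[OF vsK b\<beta>])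
lemma bR: "Vector_Spaces.linear scale (*) (\<lambda>y. \<beta> x y)" by (rule B2[OF vsK b\<beta>])

lemma bil_shift: "bil scale (*) (\<lambda>p q. \<beta> p (q * c))"
  by (rule bilK[OF bL lin_comp2[OF lin_mr bR]])

lemma Phi_lin: "Vector_Spaces.linear scale (*) (Phi \<beta>)"
  unfolding Phi_def by (rule D_lin[OF vsK b\<beta>])

lemma Phi_one: "Phi \<beta> 1 = \<beta> 1 1"
  unfolding Phi_def by (rule D_one[OF vsK b\<beta>])

lemma Psi_lin: "Vector_Spaces.linear scale (*) (\<lambda>c. Phi (\<lambda>p q. \<beta> p (q * c)) w)"
  unfolding linK_iff Phi_def
  by (simp add: distrib_left lin_add[OF bR] sum_list_addf smul_r[symmetric] lin_scale[OF bR]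
      sum_list_const_mult split_def)

lemma Iprime: "(\<Sum>(x,y)\<leftarrow>\<Delta> c. Phi (\<lambda>p q. \<beta> p (q * y)) (S x)) = \<epsilon> c * \<beta> 1 1 - \<beta> 1 c + (\<Sum>(x,y)\<leftarrow>\<Delta> c. \<beta> (S x) y)"
proof -
  have t: "tril scale (*) (\<lambda>x u v. \<beta> (S x * u) v)"
    by (rule trilK[OF lin_comp2[OF lin_comp2[OF lin_S lin_mr] bL] lin_comp2[OF lin_ml bL] bR])
  have mid: "(\<Sum>(x,y)\<leftarrow>\<Delta> c. \<Sum>(u,v)\<leftarrow>\<Delta> y. \<beta> (S x * u) v) = \<beta> 1 c"
  proof -
    have "(\<Sum>(x,y)\<leftarrow>\<Delta> c. \<Sum>(u,v)\<leftarrow>\<Delta> y. \<beta> (S x * u) v) = (\<Sum>(x,y)\<leftarrow>\<Delta> c. \<Sum>(u,v)\<leftarrow>\<Delta> x. \<beta> (S u * v) y)"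
      using D_coass[OF vsK t, of c] by simp
    also have "\<dots> = (\<Sum>(x,y)\<leftarrow>\<Delta> c. \<beta> (\<Sum>(u,v)\<leftarrow>\<Delta> x. S u * v) y)"
      by (simp add: lin_sum_list[OF bL] split_def)
    also have "\<dots> = (\<Sum>(x,y)\<leftarrow>\<Delta> c. \<beta> 1 (scale (\<epsilon> x) y))"
      by (simp add: antL lin_scale[OF bL] lin_scale[OF bR])
    also have "\<dots> = \<beta> 1 (\<Sum>(x,y)\<leftarrow>\<Delta> c. scale (\<epsilon> x) y)"
      by (simp add: lin_sum_list[OF bR] split_def)
    finally show ?thesis by (simp add: cL)
  qed
  have "Phi \<beta> (\<Sum>(x,y)\<leftarrow>\<Delta> c. S x * y) = \<epsilon> c * \<beta> 1 1"
    by (simp add: antL lin_scale[OF Phi_lin] Phi_one)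
  moreover have "Phi \<beta> (\<Sum>(x,y)\<leftarrow>\<Delta> c. S x * y) = (\<Sum>(x,y)\<leftarrow>\<Delta> c. Phi \<beta> (S x * y))"
    by (simp add: lin_sum_list[OF Phi_lin] split_def)
  moreover have "\<dots> = (\<Sum>(x,y)\<leftarrow>\<Delta> c. Phi (\<lambda>p q. \<beta> p (q * y)) (S x) + (\<Sum>(u,v)\<leftarrow>\<Delta> y. \<beta> (S x * u) v) - \<beta> (S x) y)"
    unfolding Phi_def by (simp add: D_comp[OF vsK b\<beta>])
  moreover have "\<dots> = (\<Sum>(x,y)\<leftarrow>\<Delta> c. Phi (\<lambda>p q. \<beta> p (q * y)) (S x)) + \<beta> 1 c - (\<Sum>(x,y)\<leftarrow>\<Delta> c. \<beta> (S x) y)"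
    using mid by (simp add: split_def sum_list_addf sum_list_subtractf)
  ultimately show ?thesis by (simp add: algebra_simps)
qed

end

lemma Phi_S: assumes b\<beta>: "bil scale (*) \<beta>"
  shows "Phi \<beta> (S k) = \<beta> (S k) 1 + \<beta> 1 (S k) - \<epsilon> k * \<beta> 1 1"
proof -
  note bL = bL[OF b\<beta>] and bR = bR[OF b\<beta>]
  define Psi where "Psi w c = Phi (\<lambda>p q. \<beta> p (q * c)) w" for w c
  have PsiL: "Vector_Spaces.linear scale (*) (\<lambda>c. Psi w c)" for w
    unfolding Psi_def by (rule Psi_lin[OF b\<beta>])
  have Psi1: "Psi w 1 = Phi \<beta> w" for w by (simp add: Psi_def)
  have t: "tril scale (*) (\<lambda>x u v. Psi (S x) (u * S v))"
    unfolding Psi_def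
    by (rule trilK[OF lin_comp2[OF lin_S Phi_lin[OF bil_shift[OF b\<beta>]]]
          lin_comp2[OF lin_mr Psi_lin[OF b\<beta>]] lin_comp2[OF lin_comp2[OF lin_S lin_ml] Psi_lin[OF b\<beta>]]])
  have s1: "Phi \<beta> (S k) = (\<Sum>(x,y)\<leftarrow>\<Delta> k. \<Sum>(u,v)\<leftarrow>\<Delta> y. Psi (S x) (u * S v))"
  proof -
    have "Phi \<beta> (S k) = Phi \<beta> (S (\<Sum>(x,y)\<leftarrow>\<Delta> k. scale (\<epsilon> y) x))" by (simp add: cR)
    also have "\<dots> = (\<Sum>(x,y)\<leftarrow>\<Delta> k. Psi (S x) (scale (\<epsilon> y) 1))"
      by (simp add: lin_sum_list[OF lin_S] lin_sum_list[OF Phi_lin[OF b\<beta>]] lin_scale[OF lin_S]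
          lin_scale[OF Phi_lin[OF b\<beta>]] lin_scale[OF PsiL] Psi1 split_def)
    also have "\<dots> = (\<Sum>(x,y)\<leftarrow>\<Delta> k. \<Sum>(u,v)\<leftarrow>\<Delta> y. Psi (S x) (u * S v))"
      by (simp add: antR[symmetric] lin_sum_list[OF PsiL] split_def)
    finally show ?thesis .
  qed
  also have "\<dots> = (\<Sum>(x,y)\<leftarrow>\<Delta> k. \<Sum>(u,v)\<leftarrow>\<Delta> x. Psi (S u) (v * S y))"
    using D_coass[OF vsK t, of k] by simp
  also have "\<dots> = (\<Sum>(x,y)\<leftarrow>\<Delta> k. \<epsilon> x * \<beta> 1 (S y) - \<beta> 1 (x * S y) + (\<Sum>(u,v)\<leftarrow>\<Delta> x. \<beta> (S u) (v * S y)))"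
  proof -
    have "(\<Sum>(u,v)\<leftarrow>\<Delta> x. Psi (S u) (v * S y)) = \<epsilon> x * \<beta> 1 (S y) - \<beta> 1 (x * S y) + (\<Sum>(u,v)\<leftarrow>\<Delta> x. \<beta> (S u) (v * S y))" for x y
      using Iprime[OF bil_shift[OF b\<beta>], of "S y" x] unfolding Psi_def by (simp add: mult.assoc)
    then show ?thesis by (simp add: split_def)
  qed
  also have "\<dots> = \<beta> 1 (S k) - \<epsilon> k * \<beta> 1 1 + \<beta> (S k) 1"
  proof -
    have T1: "(\<Sum>(x,y)\<leftarrow>\<Delta> k. \<epsilon> x * \<beta> 1 (S y)) = \<beta> 1 (S k)"
    proof -
      have "\<beta> 1 (S k) = \<beta> 1 (S (\<Sum>(x,y)\<leftarrow>\<Delta> k. scale (\<epsilon> x) y))" by (simp add: cL)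
      then show ?thesis by (simp add: lin_sum_list[OF lin_S] lin_sum_list[OF bR] lin_scale[OF lin_S] lin_scale[OF bR] split_def)
    qed
    have T2: "(\<Sum>(x,y)\<leftarrow>\<Delta> k. \<beta> 1 (x * S y)) = \<epsilon> k * \<beta> 1 1"
    proof -
      have "(\<Sum>(x,y)\<leftarrow>\<Delta> k. \<beta> 1 (x * S y)) = \<beta> 1 (\<Sum>(x,y)\<leftarrow>\<Delta> k. x * S y)"
        by (simp add: lin_sum_list[OF bR] split_def)
      then show ?thesis by (simp add: antR lin_scale[OF bR])
    qed
    have t3: "tril scale (*) (\<lambda>u v y. \<beta> (S u) (v * S y))"
      by (rule trilK[OF lin_comp2[OF lin_S bL] lin_comp2[OF lin_mr bR] lin_comp2[OF lin_comp2[OF lin_S lin_ml] bR]])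
    have T3: "(\<Sum>(x,y)\<leftarrow>\<Delta> k. \<Sum>(u,v)\<leftarrow>\<Delta> x. \<beta> (S u) (v * S y)) = \<beta> (S k) 1"
    proof -
      have "(\<Sum>(x,y)\<leftarrow>\<Delta> k. \<Sum>(u,v)\<leftarrow>\<Delta> x. \<beta> (S u) (v * S y)) = (\<Sum>(x,y)\<leftarrow>\<Delta> k. \<Sum>(u,v)\<leftarrow>\<Delta> y. \<beta> (S x) (u * S v))"
        using D_coass[OF vsK t3, of k] by simp
      also have "\<dots> = (\<Sum>(x,y)\<leftarrow>\<Delta> k. \<beta> (S x) (\<Sum>(u,v)\<leftarrow>\<Delta> y. u * S v))"
        by (simp add: lin_sum_list[OF bR] split_def)
      also have "\<dots> = (\<Sum>(x,y)\<leftarrow>\<Delta> k. \<beta> (S (scale (\<epsilon> y) x)) 1)"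
        by (simp add: antR lin_scale[OF bR] lin_scale[OF bL] lin_scale[OF lin_S])
      also have "\<dots> = \<beta> (S (\<Sum>(x,y)\<leftarrow>\<Delta> k. scale (\<epsilon> y) x)) 1"
        by (simp add: lin_sum_list[OF lin_S] lin_sum_list[OF bL] split_def)
      finally show ?thesis by (simp add: cR)
    qed
    show ?thesis using T1 T2 T3 by (simp add: split_def sum_list_addf sum_list_subtractf)
  qed
  finally show ?thesis by simp
qed

lemma F11: assumes k0: "\<epsilon> k = 0" shows "- S k \<in> Prim scale \<Delta>"
  unfolding Prim_def teq2_def
proof (intro CollectI allI impI)
  fix \<beta> assume "bilinear_form scale \<beta>"
  then have b\<beta>: "bil scale (*) \<beta>" by (simp add: bil_K)
  have "Phi \<beta> (- S k) = - Phi \<beta> (S k)" by (rule lin_neg[OF Phi_lin[OF b\<beta>]])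
  then show "(\<Sum>(x,y)\<leftarrow>\<Delta> (- S k). \<beta> x y) = (\<Sum>(x,y)\<leftarrow>[(- S k, 1), (1, - S k)]. \<beta> x y)"
    using Phi_S[OF b\<beta>, of k] k0
    by (simp add: Phi_def lin_neg[OF bL[OF b\<beta>]] lin_neg[OF bR[OF b\<beta>]])
qed

end

theorem corollary5:
  fixes scale :: "'k::field \<Rightarrow> 'a::ring_1 \<Rightarrow> 'a"
    and \<Delta> :: "'a \<Rightarrow> ('a \<times> 'a) list" and \<epsilon> :: "'a \<Rightarrow> 'k" and S :: "'a \<Rightarrow> 'a"
  assumes "inf_bialgebra scale \<Delta> \<epsilon>"
    and "is_antipode scale \<Delta> \<epsilon> S"
  shows "Prim scale \<Delta> \<subseteq> Ker_eps \<epsilon>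
    \<and> Ker_eps_sq scale \<epsilon> \<subseteq> Ker_eps \<epsilon>
    \<and> Prim scale \<Delta> \<inter> Ker_eps_sq scale \<epsilon> = {0}
    \<and> (\<forall>k \<in> Ker_eps \<epsilon>. \<exists>p \<in> Prim scale \<Delta>. \<exists>q \<in> Ker_eps_sq scale \<epsilon>. k = p + q)
    \<and> (\<forall>k \<in> Ker_eps \<epsilon>. - S k \<in> Prim scale \<Delta> \<and> k - (- S k) \<in> Ker_eps_sq scale \<epsilon>)"
proof -
  interpret ihopf scale \<Delta> \<epsilon> S using assms by (rule ihopf.intro)
  have A: "Prim scale \<Delta> \<subseteq> Ker_eps \<epsilon>" using Prim_eps by (auto simp: Ker_eps_def)
  have C: "Prim scale \<Delta> \<inter> Ker_eps_sq scale \<epsilon> = {0}"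
  proof
    show "Prim scale \<Delta> \<inter> Ker_eps_sq scale \<epsilon> \<subseteq> {0}"
    proof
      fix x assume x: "x \<in> Prim scale \<Delta> \<inter> Ker_eps_sq scale \<epsilon>"
      then have "S x = - x" "S x = 0" using Prim_S[of x] S_Ker_sq[of x] by auto
      then show "x \<in> {0}" by simp
    qed
    have "- S 0 \<in> Prim scale \<Delta>" by (rule F11) (simp add: lin_zero[OF lin_eps])
    then have "0 \<in> Prim scale \<Delta>" by (simp add: lin_zero[OF lin_S])
    moreover have "0 \<in> Ker_eps_sq scale \<epsilon>" unfolding Ker_eps_sq_def by (rule vs.span_zero)
    ultimately show "{0} \<subseteq> Prim scale \<Delta> \<inter> Ker_eps_sq scale \<epsilon>" by simp
  qed
  have E: "\<forall>k \<in> Ker_eps \<epsilon>. - S k \<in> Prim scale \<Delta> \<and> k - (- S k) \<in> Ker_eps_sq scale \<epsilon>"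
    using F10 F11 by (simp add: Ker_eps_def)
  have D: "\<forall>k \<in> Ker_eps \<epsilon>. \<exists>p \<in> Prim scale \<Delta>. \<exists>q \<in> Ker_eps_sq scale \<epsilon>. k = p + q"
  proof
    fix k assume "k \<in> Ker_eps \<epsilon>"
    then have "- S k \<in> Prim scale \<Delta>" "k - (- S k) \<in> Ker_eps_sq scale \<epsilon>" using E by auto
    then show "\<exists>p \<in> Prim scale \<Delta>. \<exists>q \<in> Ker_eps_sq scale \<epsilon>. k = p + q"
    proof (intro bexI)
      show "k = - S k + (k - - S k)" by simp
    qed
  qed
  show ?thesis using A Ker_sq_sub C D E by blast
qed

end
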